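(* Consider a two-player perfect-information game with exact Enforceable Payoff Frontiers $U_s$, minimum required incentives $\tau$, truncation thresholds $\beta$ and bounds $\underline V,\overline V$ as defined in the context. Let $\{\tilde U_s\}_{s\in\mathcal S}$ be any family of learned EPFs as in the context, and let $\tilde\pi$ be the strategy induced by $\{\tilde U_s\}$. Then $\tilde\pi$ is incentive compatible in the following sense. Let $s\in\mathcal S_2$ be a follower state reached with some promise, and let $a\in\mathcal A(s)$ be an action that $\tilde\pi$ recommends at $s$ with positive probability, carrying promise $\mu'$ to the child $T(a;s)$. Then the follower's expected payoff from $T(a;s)$ onward when play continues according to $\tilde\pi$ with promise $\mu'$ is at least $\tau(T(a;s))$.
   Context: A two-player perfect-information game is a finite rooted tree whose vertices are the states $s\in\mathcal S$. The leaves $\mathcal L\subseteq\mathcal S$ carry payoffs $r_1(\ell),r_2(\ell)\in\mathbb R$ for player $\mathsf P_1$ (the leader) and player $\mathsf P_2$ (the follower). Every non-leaf state belongs to exactly one of $\mathcal S_1$ (leader states) or $\mathcal S_2$ (follower states). The actions $\mathcal A(s)$ at $s$ are the edges from $s$ to its children; $\mathcal C(s)$ is the set of children and $T(a;s)$ is the child reached by action $a$. Define $\underline V,\overline V:\mathcal S\to\mathbb R$ by backward induction (they are the follower's payoffs under the leader's grim strategy and under the joint altruistic strategy): - for a leaf $\ell$: $\underline V(\ell)=\overline V(\ell)=r_2(\ell)$; - for $s\in\mathcal S_1$: $\underline V(s)=\min_{s'\in\mathcal C(s)}\underline V(s')$; - for $s\in\mathcal S_2$: $\underline V(s)=\max_{s'\in\mathcal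 C(s)}\underline V(s')$; - for every non-leaf $s$: $\overline V(s)=\max_{s'\in\mathcal C(s)}\overline V(s')$. For $s\in\mathcal S_2$ and $s'\in\mathcal C(s)$, the minimum required incentive is $\tau(s')=\max_{s^!\in\mathcal C(s),\,s^!\neq s'}\underline V(s^!)$. Let $\beta(s')=\tau(s')$ if the parent of $s'$ lies in $\mathcal S_2$, and $\beta(s')=-\infty$ if the parent lies in $\mathcal S_1$. For functions $g:\mathbb R\to\mathbb R\cup\{-\infty\}$: - the upper concave envelope $\bigwedge_i g_i$ of finitely many such functions is the pointwise infimum of all concave $h$ with $h\ge\max_i g_i$; - the left truncation is $[g\triangleright t](\mu)=g(\mu)$ if $\mu\ge t$ and $-\infty$ otherwise (so $g\triangleright(-\infty)=g$). Exact EPFs: for a leaf $\ell$, $U_\ell(\mu)=r_1(\ell)$ if $\mu=r_2(\ell)$ and $-\infty$ otherwise; for a non-leaf $s$, $U_s=\bigwedge_{s'\in\mathcal C(s)}(U_{s'}\triangleright\beta(s'))$. Learned EPFs: a family $\{\tilde U_s\}_{s\in\mathcal S}$ with $\tilde U_\ell=U_\ell$ for leaves. For each non-leaf $s$, $\tilde U_s$ is a piecewise linear function, given as the linear interpolation of finitely many points whose $x$-coordinates lie in $[\underline V(s),\overline V(s)]$ and include both endpoints. It is real-valued on $[\underline V(s),\overline V(s)]$ and equal to $-\infty$ outside this interval. Induced strategy $\tilde\pi$: play starts at the root with promise $\mu_{\mathrm{root}}\in\arg\max_\mu\tilde U_{\mathrm{root}}(\mu)$. At a non-leaf state $s$ reached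 with promise $\mu$, choose a maximizer $(s',s'',t,\mu',\mu'')$, subject to $s',s''\in\mathcal C(s)$, $t\in[0,1]$ and $t\mu'+(1-t)\mu''=\mu$, of $$t\,[\tilde U_{s'}\triangleright\beta(s')](\mu')+(1-t)\,[\tilde U_{s''}\triangleright\beta(s'')](\mu'').$$ Then move to $s'$ with probability $t$ carrying promise $\mu'$, and to $s''$ with probability $1-t$ carrying promise $\mu''$. At leader states this is the leader's mixed action; at follower states it is the action the leader recommends to the follower, who follows recommendations. *)

theory Defs
  imports Complex_Main "HOL-Library.Extended_Real"
begin

text \<open>A leaf carries the payoffs (r1, r2) of the leader P1
  and the follower P2. An inner node is owned by the leader or the follower and has an
  (ordered) list of children; the actions at a node are the indices into this list.
  States of a game g are identified with paths (lists of action indices) from the root,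
  so that every non-root state has a unique parent (the path without its last index).\<close>

datatype player = Leader | Follower

datatype game = Leaf real real | Node player "game list"

fun wf_game :: "game \<Rightarrow> bool" where
  "wf_game (Leaf r1 r2) = True"
| "wf_game (Node pl cs) = (cs \<noteq> [] \<and> (\<forall>c\<in>set cs. wf_game c))"

fun sub :: "game \<Rightarrow> nat list \<Rightarrow> game option" where
  "sub g [] = Some g"
| "sub (Leaf r1 r2) (i # p) = None"
| "sub (Node pl cs) (i # p) = (if i < length cs then sub (cs ! i) p else None)"

fun Vlow :: "game \<Rightarrow> real" where
  "Vlow (Leaf r1 r2) = r2"
| "Vlow (Node pl cs) =
     (if pl = Leader then Min (set (map Vlow cs)) else Max (set (map Vlow cs)))"

fun Vup :: "game \<Rightarrow> real" where
  "Vup (Leaf r1 r2) = r2"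
| "Vup (Node pl cs) = Max (set (map Vup cs))"

text \<open>For a follower node with children cs, the minimum required incentive of child i is
  the maximum of Vlow over the other children (the maximum of the empty set being -\<infinity>).\<close>
definition tau :: "game list \<Rightarrow> nat \<Rightarrow> ereal" where
  "tau cs i = (SUP j\<in>{j. j < length cs \<and> j \<noteq> i}. ereal (Vlow (cs ! j)))"

definition beta :: "player \<Rightarrow> game list \<Rightarrow> nat \<Rightarrow> ereal" where
  "beta pl cs i = (if pl = Follower then tau cs i else -\<infinity>)"

definition trunc :: "(real \<Rightarrow> ereal) \<Rightarrow> ereal \<Rightarrow> real \<Rightarrow> ereal" where
  "trunc f t \<mu> = (if t \<le> ereal \<mu> then f \<mu> else -\<infinity>)"

definition pl_interp :: "real \<Rightarrow> real \<Rightarrow> (real \<Rightarrow> ereal) \<Rightarrow> bool" where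
  "pl_interp a b f \<longleftrightarrow>
     (\<exists>xs ys :: real list.
        xs \<noteq> [] \<and> length ys = length xs \<and> sorted_wrt (<) xs \<and>
        hd xs = a \<and> last xs = b \<and>
        f a = ereal (hd ys) \<and>
        (\<forall>k. Suc k < length xs \<longrightarrow>
           (\<forall>\<mu>. xs ! k \<le> \<mu> \<and> \<mu> \<le> xs ! Suc k \<longrightarrow>
              f \<mu> = ereal (ys ! k + (\<mu> - xs ! k) / (xs ! Suc k - xs ! k) * (ys ! Suc k - ys ! k)))) \<and>
        (\<forall>\<mu>. \<mu> < a \<or> b < \<mu> \<longrightarrow> f \<mu> = -\<infinity>))"

definition learned_EPFs :: "game \<Rightarrow> (nat list \<Rightarrow> real \<Rightarrow> ereal) \<Rightarrow> bool" where
  "learned_EPFs g U \<longleftrightarrow>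
     (\<forall>p g'. sub g p = Some g' \<longrightarrow>
        (case g' of
           Leaf r1 r2 \<Rightarrow> U p = (\<lambda>\<mu>. if \<mu> = r2 then ereal r1 else -\<infinity>)
         | Node pl cs \<Rightarrow> pl_interp (Vlow g') (Vup g') (U p)))"

text \<open>A (memoryless in state and promise) choice rule: at state p with promise \<mu> it
  returns (i, j, t, \<mu>1, \<mu>2): go to child i with probability t carrying promise \<mu>1 and to
  child j with probability 1 - t carrying promise \<mu>2.\<close>
type_synonym strategy = "nat list \<Rightarrow> real \<Rightarrow> nat \<times> nat \<times> real \<times> real \<times> real"

definition objective ::
  "(nat list \<Rightarrow> real \<Rightarrow> ereal) \<Rightarrow> nat list \<Rightarrow> player \<Rightarrow> game list \<Rightarrow>
   nat \<times> nat \<times> real \<times> real \<times> real \<Rightarrow> ereal" where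
  "objective U p pl cs c = (case c of (i, j, t, \<mu>1, \<mu>2) \<Rightarrow>
      ereal t * trunc (U (p @ [i])) (beta pl cs i) \<mu>1
      + ereal (1 - t) * trunc (U (p @ [j])) (beta pl cs j) \<mu>2)"

definition feasible :: "game list \<Rightarrow> real \<Rightarrow> nat \<times> nat \<times> real \<times> real \<times> real \<Rightarrow> bool" where
  "feasible cs \<mu> c = (case c of (i, j, t, \<mu>1, \<mu>2) \<Rightarrow>
      i < length cs \<and> j < length cs \<and> 0 \<le> t \<and> t \<le> 1 \<and> t * \<mu>1 + (1 - t) * \<mu>2 = \<mu>)"

definition is_maximizer ::
  "(nat list \<Rightarrow> real \<Rightarrow> ereal) \<Rightarrow> nat list \<Rightarrow> player \<Rightarrow> game list \<Rightarrow> real \<Rightarrow>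
   nat \<times> nat \<times> real \<times> real \<times> real \<Rightarrow> bool" where
  "is_maximizer U p pl cs \<mu> c \<longleftrightarrow>
     feasible cs \<mu> c \<and> (\<forall>c'. feasible cs \<mu> c' \<longrightarrow> objective U p pl cs c' \<le> objective U p pl cs c)"

text \<open>(State, promise) pairs reached with positive probability when play starts at the
  root with promise \<mu>0 and follows the choice rule \<sigma>.\<close>
inductive reached :: "game \<Rightarrow> strategy \<Rightarrow> real \<Rightarrow> nat list \<Rightarrow> real \<Rightarrow> bool"
  for g \<sigma> \<mu>0 where
  root: "reached g \<sigma> \<mu>0 [] \<mu>0"
| left: "reached g \<sigma> \<mu>0 p \<mu> \<Longrightarrow> sub g p = Some (Node pl cs) \<Longrightarrow>
         \<sigma> p \<mu> = (i, j, t, \<mu>1, \<mu>2) \<Longrightarrow> 0 < t \<Longrightarrow> reached g \<sigma> \<mu>0 (p @ [i]) \<mu>1"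
| right: "reached g \<sigma> \<mu>0 p \<mu> \<Longrightarrow> sub g p = Some (Node pl cs) \<Longrightarrow>
         \<sigma> p \<mu> = (i, j, t, \<mu>1, \<mu>2) \<Longrightarrow> t < 1 \<Longrightarrow> reached g \<sigma> \<mu>0 (p @ [j]) \<mu>2"

definition induced_by :: "game \<Rightarrow> (nat list \<Rightarrow> real \<Rightarrow> ereal) \<Rightarrow> real \<Rightarrow> strategy \<Rightarrow> bool" where
  "induced_by g U \<mu>0 \<sigma> \<longleftrightarrow>
     (\<forall>\<mu>. U [] \<mu> \<le> U [] \<mu>0) \<and>
     (\<forall>p \<mu> pl cs. reached g \<sigma> \<mu>0 p \<mu> \<longrightarrow> sub g p = Some (Node pl cs) \<longrightarrow>
        is_maximizer U p pl cs \<mu> (\<sigma> p \<mu>))"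

function pay2 :: "game \<Rightarrow> strategy \<Rightarrow> nat list \<Rightarrow> real \<Rightarrow> real" where
  "pay2 (Leaf r1 r2) \<sigma> p \<mu> = r2"
| "pay2 (Node pl cs) \<sigma> p \<mu> =
     (let (i, j, t, \<mu>1, \<mu>2) = \<sigma> p \<mu> in
        (if i < length cs then t * pay2 (cs ! i) \<sigma> (p @ [i]) \<mu>1 else 0)
      + (if j < length cs then (1 - t) * pay2 (cs ! j) \<sigma> (p @ [j]) \<mu>2 else 0))"
  by pat_completeness auto
termination
  by (relation "measure (\<lambda>(h, \<sigma>, p, \<mu>). size h)")
     (auto intro!: le_imp_less_Suc size_list_estimation' nth_mem)

end

theory Submission
  imports Defs
begin

lemma sub_append: "sub g (p @ q) = (case sub g p of None \<Rightarrow> None | Some h \<Rightarrow> sub h q)"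
proof (induction p arbitrary: g)
  case Nil then show ?case by simp
next
  case (Cons a p) then show ?case by (cases g) auto
qed

lemma sub_child: "sub g p = Some (Node pl cs) \<Longrightarrow> i < length cs \<Longrightarrow> sub g (p @ [i]) = Some (cs ! i)"
  by (simp add: sub_append)

lemma wf_sub: "wf_game g \<Longrightarrow> sub g p = Some h \<Longrightarrow> wf_game h"
proof (induction p arbitrary: g)
  case Nil then show ?case by simp
next
  case (Cons a p) then show ?case by (cases g) (auto split: if_splits intro: nth_mem)
qed

lemma Vlow_le_Vup: "wf_game h \<Longrightarrow> Vlow h \<le> Vup h"
proof (induction h)
  case (Leaf x1 x2) then show ?case by simp
next
  case (Node pl cs)
  then have ne: "cs \<noteq> []" and wfc: "\<And>c. c \<in> set cs \<Longrightarrow> wf_game c" by auto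
  have le: "\<And>c. c \<in> set cs \<Longrightarrow> Vlow c \<le> Vup c" using Node wfc by auto
  show ?case
  proof (cases "pl = Leader")
    case True
    obtain c where c: "c \<in> set cs" using ne by (cases cs) auto
    have "Min (set (map Vlow cs)) \<le> Vlow c" using c by (intro Min_le) auto
    also have "\<dots> \<le> Vup c" using le c by auto
    also have "\<dots> \<le> Max (set (map Vup cs))" using c by (intro Max_ge) auto
    finally show ?thesis using True by simp
  next
    case False
    have "Max (set (map Vlow cs)) \<in> set (map Vlow cs)" using ne by (intro Max_in) auto
    then obtain c where c: "c \<in> set cs" "Max (set (map Vlow cs)) = Vlow c" by auto
    have "Vlow c \<le> Vup c" using le c by auto
    also have "\<dots> \<le> Max (set (map Vup cs))" using c by (intro Max_ge) auto
    finally show ?thesis using False c by simp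
  qed
qed

lemma pl_interp_out: "pl_interp a b f \<Longrightarrow> f \<mu> \<noteq> -\<infinity> \<Longrightarrow> a \<le> \<mu> \<and> \<mu> \<le> b"
  unfolding pl_interp_def by force

lemma pl_interp_in:
  assumes "pl_interp a b f" "a \<le> \<mu>" "\<mu> \<le> b"
  shows "\<exists>r. f \<mu> = ereal r"
proof -
  obtain xs ys where xs: "xs \<noteq> []" "length ys = length xs" "hd xs = a" "last xs = b"
    "f a = ereal (hd ys)"
    and seg: "\<And>k \<mu>. Suc k < length xs \<Longrightarrow> xs ! k \<le> \<mu> \<Longrightarrow> \<mu> \<le> xs ! Suc k \<Longrightarrow>
           f \<mu> = ereal (ys ! k + (\<mu> - xs ! k) / (xs ! Suc k - xs ! k) * (ys ! Suc k - ys ! k))"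
    using assms(1) unfolding pl_interp_def by blast
  show ?thesis
  proof (cases "\<mu> = a")
    case True then show ?thesis using xs by auto
  next
    case False
    then have lt: "a < \<mu>" using assms by auto
    have len: "2 \<le> length xs"
    proof (rule ccontr)
      assume "\<not> 2 \<le> length xs"
      then have "length xs = 1" using xs(1) by (cases xs) (auto simp: Suc_le_eq)
      then have "hd xs = last xs" by (cases xs) auto
      then show False using xs lt assms by auto
    qed
    define K where "K = {k. Suc k < length xs \<and> xs ! k \<le> \<mu>}"
    have fin: "finite K" unfolding K_def by (rule finite_subset[of _ "{..<length xs}"]) auto
    have "0 \<in> K" unfolding K_def using len xs(1,3) lt by (auto simp: hd_conv_nth)
    then have kK: "Max K \<in> K" using fin by (intro Max_in) auto
    define k where "k = Max K"
    have k1: "Suc k < length xs" "xs ! k \<le> \<mu>" using kK unfolding K_def k_def by auto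
    have k2: "\<mu> \<le> xs ! Suc k"
    proof (cases "Suc (Suc k) < length xs")
      case True
      show ?thesis
      proof (rule ccontr)
        assume "\<not> \<mu> \<le> xs ! Suc k"
        then have "Suc k \<in> K" unfolding K_def using True by auto
        then have "Suc k \<le> k" unfolding k_def using fin by (intro Max_ge) auto
        then show False by simp
      qed
    next
      case False
      then have "Suc k = length xs - 1" using k1 by simp
      then have "xs ! Suc k = b" using xs(1,4) by (simp add: last_conv_nth)
      then show ?thesis using assms by simp
    qed
    show ?thesis using seg[OF k1(1) k1(2) k2] by blast
  qed
qed

lemma U_facts:
  assumes "learned_EPFs g U" "sub g p = Some h"
  shows "(U p \<mu> \<noteq> -\<infinity> \<longleftrightarrow> Vlow h \<le> \<mu> \<and> \<mu> \<le> Vup h) \<and> U p \<mu> \<noteq> \<infinity>"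
proof (cases h)
  case (Leaf r1 r2)
  then have "U p = (\<lambda>\<mu>. if \<mu> = r2 then ereal r1 else -\<infinity>)"
    using assms unfolding learned_EPFs_def by force
  then show ?thesis using Leaf by auto
next
  case (Node pl cs)
  then have pi: "pl_interp (Vlow h) (Vup h) (U p)"
    using assms unfolding learned_EPFs_def by force
  show ?thesis
  proof (cases "Vlow h \<le> \<mu> \<and> \<mu> \<le> Vup h")
    case True then show ?thesis using pl_interp_in[OF pi] by force
  next
    case False
    then have "U p \<mu> = -\<infinity>" using pl_interp_out[OF pi] by blast
    then show ?thesis using False by simp
  qed
qed


lemma exists_good:
  assumes wf: "wf_game g" and L: "learned_EPFs g U" and sp: "sub g p = Some (Node pl cs)"
    and r: "Vlow (Node pl cs) \<le> \<mu>" "\<mu> \<le> Vup (Node pl cs)"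
  shows "\<exists>c. feasible cs \<mu> c \<and> objective U p pl cs c \<noteq> -\<infinity>"
proof -
  have wfn: "wf_game (Node pl cs)" using wf_sub[OF wf sp] .
  then have ne: "cs \<noteq> []" and wfc: "\<And>k. k < length cs \<Longrightarrow> wf_game (cs ! k)" by (auto intro: nth_mem)
  have ex: "\<exists>k<length cs. F (set (map f cs)) = f (cs ! k)" if "\<And>A::real set. A \<noteq> {} \<Longrightarrow> finite A \<Longrightarrow> F A \<in> A" for F :: "real set \<Rightarrow> real" and f :: "game \<Rightarrow> real"
  proof -
    have "F (set (map f cs)) \<in> set (map f cs)" using ne by (intro that) auto
    then show ?thesis by (auto simp: in_set_conv_nth)
  qed
  obtain k2 where k2: "k2 < length cs" "Max (set (map Vup cs)) = Vup (cs ! k2)"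
    using ex[of Max Vup] Max_in by blast
  have vupk2: "Vup (Node pl cs) = Vup (cs ! k2)" using k2 by simp
  obtain k1 where k1: "k1 < length cs" "Vlow (Node pl cs) = Vlow (cs ! k1)"
    and b1: "beta pl cs k1 \<le> ereal (Vlow (cs ! k1))"
  proof (cases "pl = Leader")
    case True
    obtain k where k: "k < length cs" "Min (set (map Vlow cs)) = Vlow (cs ! k)"
      using ex[of Min Vlow] Min_in by blast
    show ?thesis using that[of k] k True by (simp add: beta_def)
  next
    case False
    obtain k where k: "k < length cs" "Max (set (map Vlow cs)) = Vlow (cs ! k)"
      using ex[of Max Vlow] Max_in by blast
    have "tau cs k \<le> ereal (Vlow (cs ! k))" unfolding tau_def
    proof (rule SUP_least)
      fix j assume "j \<in> {j. j < length cs \<and> j \<noteq> k}"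
      then have "Vlow (cs ! j) \<le> Max (set (map Vlow cs))" by (intro Max_ge) auto
      then show "ereal (Vlow (cs ! j)) \<le> ereal (Vlow (cs ! k))" using k by simp
    qed
    then show ?thesis using that[of k] k False by (simp add: beta_def)
  qed
  have b2: "beta pl cs k2 \<le> ereal (Vup (cs ! k2))"
  proof (cases "pl = Leader")
    case True then show ?thesis by (simp add: beta_def)
  next
    case False
    have "tau cs k2 \<le> ereal (Vup (cs ! k2))" unfolding tau_def
    proof (rule SUP_least)
      fix j assume "j \<in> {j. j < length cs \<and> j \<noteq> k2}"
      then have "Vlow (cs ! j) \<le> Max (set (map Vlow cs))" by (intro Max_ge) auto
      also have "\<dots> = Vlow (Node pl cs)" using False by (cases pl) auto
      also have "\<dots> \<le> Vup (Node pl cs)" using r by simp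
      finally show "ereal (Vlow (cs ! j)) \<le> ereal (Vup (cs ! k2))" using vupk2 by simp
    qed
    then show ?thesis using False by (simp add: beta_def)
  qed
  define x1 where "x1 = Vlow (cs ! k1)"
  define x2 where "x2 = Vup (cs ! k2)"
  have s1: "sub g (p @ [k1]) = Some (cs ! k1)" using sub_child[OF sp k1(1)] .
  have s2: "sub g (p @ [k2]) = Some (cs ! k2)" using sub_child[OF sp k2(1)] .
  have u1: "U (p @ [k1]) x1 \<noteq> -\<infinity>" "U (p @ [k1]) x1 \<noteq> \<infinity>"
    using U_facts[OF L s1, of x1] Vlow_le_Vup[OF wfc[OF k1(1)]] unfolding x1_def by auto
  have u2: "U (p @ [k2]) x2 \<noteq> -\<infinity>" "U (p @ [k2]) x2 \<noteq> \<infinity>"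
    using U_facts[OF L s2, of x2] Vlow_le_Vup[OF wfc[OF k2(1)]] unfolding x2_def by auto
  obtain a1 where a1: "trunc (U (p @ [k1])) (beta pl cs k1) x1 = ereal a1"
    using u1 b1 unfolding trunc_def x1_def by (cases "U (p @ [k1]) (Vlow (cs ! k1))") auto
  obtain a2 where a2: "trunc (U (p @ [k2])) (beta pl cs k2) x2 = ereal a2"
    using u2 b2 unfolding trunc_def x2_def by (cases "U (p @ [k2]) (Vup (cs ! k2))") auto
  have m: "x1 \<le> \<mu>" "\<mu> \<le> x2" using r k1 vupk2 unfolding x1_def x2_def by auto
  obtain t where t: "0 \<le> t" "t \<le> 1" "t * x1 + (1 - t) * x2 = \<mu>"
  proof (cases "x1 = x2")
    case True then show ?thesis using that[of 1] m by auto
  next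
    case False
    then have d: "x2 - x1 > 0" using m by auto
    show ?thesis
    proof (rule that[of "(x2 - \<mu>) / (x2 - x1)"])
      show "0 \<le> (x2 - \<mu>) / (x2 - x1)" using d m by auto
      show "(x2 - \<mu>) / (x2 - x1) \<le> 1" using d m by auto
      show "(x2 - \<mu>) / (x2 - x1) * x1 + (1 - (x2 - \<mu>) / (x2 - x1)) * x2 = \<mu>"
      proof -
        have e: "(x2 - \<mu>) / (x2 - x1) * (x2 - x1) = x2 - \<mu>" using d by simp
        have g: "\<And>T::real. T * x1 + (1 - T) * x2 = x2 - T * (x2 - x1)" by (simp add: algebra_simps)
        show ?thesis using g[of "(x2 - \<mu>) / (x2 - x1)"] e by linarith
      qed
    qed
  qed
  have "feasible cs \<mu> (k1, k2, t, x1, x2)" using t k1 k2 unfolding feasible_def by auto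
  moreover have "objective U p pl cs (k1, k2, t, x1, x2) \<noteq> -\<infinity>"
    unfolding objective_def using a1 a2 by simp
  ultimately show ?thesis by blast
qed


lemma ereal_comb:
  fixes A B :: ereal
  assumes "0 \<le> t" "t \<le> 1" "A \<noteq> \<infinity>" "B \<noteq> \<infinity>" "ereal t * A + ereal (1 - t) * B \<noteq> -\<infinity>"
  shows "(0 < t \<longrightarrow> A \<noteq> -\<infinity>) \<and> (t < 1 \<longrightarrow> B \<noteq> -\<infinity>)"
  using assms by (cases A; cases B) (auto split: if_splits)

lemma step:
  assumes wf: "wf_game g" and L: "learned_EPFs g U" and sp: "sub g p = Some (Node pl cs)"
    and r: "Vlow (Node pl cs) \<le> \<mu>" "\<mu> \<le> Vup (Node pl cs)"
    and mx: "is_maximizer U p pl cs \<mu> (i, j, t, \<mu>1, \<mu>2)"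
  shows "(0 < t \<longrightarrow> i < length cs \<and> beta pl cs i \<le> ereal \<mu>1 \<and> Vlow (cs ! i) \<le> \<mu>1 \<and> \<mu>1 \<le> Vup (cs ! i))
       \<and> (t < 1 \<longrightarrow> j < length cs \<and> beta pl cs j \<le> ereal \<mu>2 \<and> Vlow (cs ! j) \<le> \<mu>2 \<and> \<mu>2 \<le> Vup (cs ! j))"
proof -
  obtain c where c: "feasible cs \<mu> c" "objective U p pl cs c \<noteq> -\<infinity>"
    using exists_good[OF wf L sp r] by blast
  have f: "feasible cs \<mu> (i, j, t, \<mu>1, \<mu>2)" and le: "objective U p pl cs c \<le> objective U p pl cs (i, j, t, \<mu>1, \<mu>2)"
    using mx c unfolding is_maximizer_def by blast+
  have o: "objective U p pl cs (i, j, t, \<mu>1, \<mu>2) \<noteq> -\<infinity>" using le c(2) by auto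
  have ij: "i < length cs" "j < length cs" "0 \<le> t" "t \<le> 1" using f unfolding feasible_def by auto
  note si = sub_child[OF sp ij(1)] and sj = sub_child[OF sp ij(2)]
  have ni: "trunc (U (p @ [i])) (beta pl cs i) \<mu>1 \<noteq> \<infinity>"
    using U_facts[OF L si, of \<mu>1] unfolding trunc_def by auto
  have nj: "trunc (U (p @ [j])) (beta pl cs j) \<mu>2 \<noteq> \<infinity>"
    using U_facts[OF L sj, of \<mu>2] unfolding trunc_def by auto
  have cmb: "(0 < t \<longrightarrow> trunc (U (p @ [i])) (beta pl cs i) \<mu>1 \<noteq> -\<infinity>) \<and>
             (t < 1 \<longrightarrow> trunc (U (p @ [j])) (beta pl cs j) \<mu>2 \<noteq> -\<infinity>)"
    using ereal_comb[OF ij(3,4) ni nj] o unfolding objective_def by auto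
  show ?thesis
  proof (intro conjI impI)
    assume "0 < t"
    then have "trunc (U (p @ [i])) (beta pl cs i) \<mu>1 \<noteq> -\<infinity>" using cmb by auto
    then have "beta pl cs i \<le> ereal \<mu>1" "U (p @ [i]) \<mu>1 \<noteq> -\<infinity>" unfolding trunc_def by (auto split: if_splits)
    then show "i < length cs" "beta pl cs i \<le> ereal \<mu>1" "Vlow (cs ! i) \<le> \<mu>1" "\<mu>1 \<le> Vup (cs ! i)"
      using U_facts[OF L si, of \<mu>1] ij by auto
  next
    assume "t < 1"
    then have "trunc (U (p @ [j])) (beta pl cs j) \<mu>2 \<noteq> -\<infinity>" using cmb by auto
    then have "beta pl cs j \<le> ereal \<mu>2" "U (p @ [j]) \<mu>2 \<noteq> -\<infinity>" unfolding trunc_def by (auto split: if_splits)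
    then show "j < length cs" "beta pl cs j \<le> ereal \<mu>2" "Vlow (cs ! j) \<le> \<mu>2" "\<mu>2 \<le> Vup (cs ! j)"
      using U_facts[OF L sj, of \<mu>2] ij by auto
  qed
qed

lemma reached_inv:
  assumes wf: "wf_game g" and L: "learned_EPFs g U" and I: "induced_by g U \<mu>0 \<sigma>"
  shows "reached g \<sigma> \<mu>0 p \<mu> \<Longrightarrow> \<exists>h. sub g p = Some h \<and> Vlow h \<le> \<mu> \<and> \<mu> \<le> Vup h"
proof (induction rule: reached.induct)
  case root
  have s0: "sub g [] = Some g" by simp
  have "U [] (Vlow g) \<noteq> -\<infinity>" using U_facts[OF L s0, of "Vlow g"] Vlow_le_Vup[OF wf] by auto
  moreover have "U [] (Vlow g) \<le> U [] \<mu>0" using I unfolding induced_by_def by auto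
  ultimately have "U [] \<mu>0 \<noteq> -\<infinity>" by auto
  then show ?case using U_facts[OF L s0, of \<mu>0] by auto
next
  case (left p \<mu> pl cs i j t \<mu>1 \<mu>2)
  have mx: "is_maximizer U p pl cs \<mu> (i, j, t, \<mu>1, \<mu>2)"
    using I left unfolding induced_by_def by metis
  have "i < length cs \<and> Vlow (cs ! i) \<le> \<mu>1 \<and> \<mu>1 \<le> Vup (cs ! i)"
    using step[OF wf L left(2) _ _ mx] left by auto
  then show ?case using sub_child[OF left(2)] by auto
next
  case (right p \<mu> pl cs i j t \<mu>1 \<mu>2)
  have mx: "is_maximizer U p pl cs \<mu> (i, j, t, \<mu>1, \<mu>2)"
    using I right unfolding induced_by_def by metis
  have "j < length cs \<and> Vlow (cs ! j) \<le> \<mu>2 \<and> \<mu>2 \<le> Vup (cs ! j)"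
    using step[OF wf L right(2) _ _ mx] right by auto
  then show ?case using sub_child[OF right(2)] by auto
qed

lemma pay2_eq:
  assumes wf: "wf_game g" and L: "learned_EPFs g U" and I: "induced_by g U \<mu>0 \<sigma>"
  shows "reached g \<sigma> \<mu>0 p \<mu> \<Longrightarrow> sub g p = Some h \<Longrightarrow> pay2 h \<sigma> p \<mu> = \<mu>"
proof (induction h arbitrary: p \<mu>)
  case (Leaf r1 r2)
  then show ?case using reached_inv[OF wf L I Leaf(1)] by auto
next
  case (Node pl cs)
  obtain i j t \<mu>1 \<mu>2 where sg: "\<sigma> p \<mu> = (i, j, t, \<mu>1, \<mu>2)" by (cases "\<sigma> p \<mu>") auto
  have "is_maximizer U p pl cs \<mu> (\<sigma> p \<mu>)" using I Node.prems unfolding induced_by_def by blast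
  then have f: "i < length cs" "j < length cs" "t * \<mu>1 + (1 - t) * \<mu>2 = \<mu>"
    using sg unfolding is_maximizer_def feasible_def by auto
  have a: "t * pay2 (cs ! i) \<sigma> (p @ [i]) \<mu>1 = t * \<mu>1"
  proof (cases "0 < t")
    case True
    have "reached g \<sigma> \<mu>0 (p @ [i]) \<mu>1" using reached.left[OF Node.prems(1,2) sg True] .
    then show ?thesis using Node.IH[of "cs ! i"] f sub_child[OF Node.prems(2) f(1)] by auto
  next
    case False
    have "0 \<le> t" using \<open>is_maximizer U p pl cs \<mu> (\<sigma> p \<mu>)\<close> sg unfolding is_maximizer_def feasible_def by auto
    then have "t = 0" using False by auto
    then show ?thesis by simp
  qed
  have b: "(1 - t) * pay2 (cs ! j) \<sigma> (p @ [j]) \<mu>2 = (1 - t) * \<mu>2"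
  proof (cases "t < 1")
    case True
    have "reached g \<sigma> \<mu>0 (p @ [j]) \<mu>2" using reached.right[OF Node.prems(1,2) sg True] .
    then show ?thesis using Node.IH[of "cs ! j"] f sub_child[OF Node.prems(2) f(2)] by auto
  next
    case False
    have "t \<le> 1" using \<open>is_maximizer U p pl cs \<mu> (\<sigma> p \<mu>)\<close> sg unfolding is_maximizer_def feasible_def by auto
    then have "t = 1" using False by auto
    then show ?thesis by simp
  qed
  have "pay2 (Node pl cs) \<sigma> p \<mu> = t * pay2 (cs ! i) \<sigma> (p @ [i]) \<mu>1 + (1 - t) * pay2 (cs ! j) \<sigma> (p @ [j]) \<mu>2"
    using sg f by simp
  then show ?case using a b f(3) by linarith
qed

theorem theorem2:
  fixes g :: game and U :: "nat list \<Rightarrow> real \<Rightarrow> ereal"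
    and \<mu>0 :: real and \<sigma> :: strategy
  assumes "wf_game g"
    and "learned_EPFs g U"
    and "induced_by g U \<mu>0 \<sigma>"
    and "reached g \<sigma> \<mu>0 p \<mu>"
    and "sub g p = Some (Node Follower cs)"
    and "\<sigma> p \<mu> = (i, j, t, \<mu>1, \<mu>2)"
  shows "(0 < t \<longrightarrow> ereal (pay2 (cs ! i) \<sigma> (p @ [i]) \<mu>1) \<ge> tau cs i)
       \<and> (t < 1 \<longrightarrow> ereal (pay2 (cs ! j) \<sigma> (p @ [j]) \<mu>2) \<ge> tau cs j)"
proof -
  have mx: "is_maximizer U p Follower cs \<mu> (i, j, t, \<mu>1, \<mu>2)"
    using assms unfolding induced_by_def by metis
  obtain h where h: "sub g p = Some h" "Vlow h \<le> \<mu>" "\<mu> \<le> Vup h"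
    using reached_inv[OF assms(1-4)] by blast
  have hh: "h = Node Follower cs" using h assms(5) by simp
  note st = step[OF assms(1,2,5) _ _ mx] h[unfolded hh]
  show ?thesis
  proof (intro conjI impI)
    assume t: "0 < t"
    have "reached g \<sigma> \<mu>0 (p @ [i]) \<mu>1" using reached.left[OF assms(4,5,6) t] .
    moreover have "i < length cs" "tau cs i \<le> ereal \<mu>1" using st t by (auto simp: beta_def)
    ultimately show "ereal (pay2 (cs ! i) \<sigma> (p @ [i]) \<mu>1) \<ge> tau cs i"
      using pay2_eq[OF assms(1-3)] sub_child[OF assms(5)] by auto
  next
    assume t: "t < 1"
    have "reached g \<sigma> \<mu>0 (p @ [j]) \<mu>2" using reached.right[OF assms(4,5,6) t] .
    moreover have "j < length cs" "tau cs j \<le> ereal \<mu>2" using st t by (auto simp: beta_def)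
    ultimately show "ereal (pay2 (cs ! j) \<sigma> (p @ [j]) \<mu>2) \<ge> tau cs j"
      using pay2_eq[OF assms(1-3)] sub_child[OF assms(5)] by auto
  qed
qed

end
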